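(* Suppose $G$ is a topological graph whose edge relation is transitive and such that, for the quotient map $\pi\colon V(G)\to |G|$, we have $\operatorname{card}(\pi^{-1}(x))\le 2$ for every $x\in|G|$. Then $\dim|G|\le 1$.
   Context: A topological graph is a pair $G=(V(G),E(G))$ where $V(G)$ is a compact, second countable, zero-dimensional space and $E(G)\subseteq V(G)^2$ is a closed, reflexive and symmetric relation. If $E(G)$ is also transitive (so an equivalence relation), the topological realization $|G|$ is the quotient space $V(G)/E(G)$, and $\pi$ denotes the quotient map. $\dim$ is covering dimension. *)

theory Defs
  imports "HOL-Analysis.Analysis"
begin

definition quotient_topology :: "'a topology \<Rightarrow> ('a \<Rightarrow> 'b) \<Rightarrow> 'b topology" where
  "quotient_topology X f =
     topology (\<lambda>U. U \<subseteq> f ` topspace X \<and> openin X {x \<in> topspace X. f x \<in> U})"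

definition rel_class :: "('a \<times> 'a) set \<Rightarrow> 'a \<Rightarrow> 'a set" where
  "rel_class E x = E `` {x}"

text \<open>Topological graph: V(G) is the space X (compact, second countable,
  zero-dimensional), E(G) = E is a closed, reflexive, symmetric relation on it.\<close>
definition topological_graph :: "'a topology \<Rightarrow> ('a \<times> 'a) set \<Rightarrow> bool" where
  "topological_graph X E \<longleftrightarrow>
     compact_space X \<and> second_countable X \<and> X dim_le 0 \<and>
     E \<subseteq> topspace X \<times> topspace X \<and>
     closedin (prod_topology X X) E \<and>
     (\<forall>x \<in> topspace X. (x, x) \<in> E) \<and> sym E"

text \<open>Topological realization |G| = V(G)/E(G) (for transitive E).\<close>
definition realization :: "'a topology \<Rightarrow> ('a \<times> 'a) set \<Rightarrow> 'a set topology" where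
  "realization X E = quotient_topology X (rel_class E)"

definition covering_dim_le :: "'a topology \<Rightarrow> int \<Rightarrow> bool" where
  "covering_dim_le X n \<longleftrightarrow>
     (\<forall>\<U>. finite \<U> \<and> (\<forall>U \<in> \<U>. openin X U) \<and> \<Union>\<U> = topspace X \<longrightarrow>
        (\<exists>\<V>. finite \<V> \<and> (\<forall>V \<in> \<V>. openin X V) \<and> \<Union>\<V> = topspace X \<and>
              (\<forall>V \<in> \<V>. \<exists>U \<in> \<U>. V \<subseteq> U) \<and>
              (\<forall>x \<in> topspace X. int (card {V \<in> \<V>. x \<in> V}) \<le> n + 1)))"

end

theory Submission
  imports Defs
begin

lemma quotient_topology_open:
  "openin (quotient_topology X f) U \<longleftrightarrow> U \<subseteq> f ` topspace X \<and> openin X {x \<in> topspace X. f x \<in> U}"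
proof -
  let ?L = "\<lambda>U. U \<subseteq> f ` topspace X \<and> openin X {x \<in> topspace X. f x \<in> U}"
  have i1: "\<forall>S T. ?L S \<longrightarrow> ?L T \<longrightarrow> ?L (S \<inter> T)"
  proof (intro allI impI)
    fix S T assume "?L S" "?L T"
    moreover have "{x \<in> topspace X. f x \<in> S \<inter> T} = {x \<in> topspace X. f x \<in> S} \<inter> {x \<in> topspace X. f x \<in> T}" by auto
    ultimately show "?L (S \<inter> T)" by auto
  qed
  have i2: "\<forall>K. (\<forall>S\<in>K. ?L S) \<longrightarrow> ?L (\<Union>K)"
  proof (intro allI impI)
    fix K assume K: "\<forall>S\<in>K. ?L S"
    have "{x \<in> topspace X. f x \<in> \<Union>K} = \<Union>((\<lambda>S. {x \<in> topspace X. f x \<in> S}) ` K)" by auto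
    moreover have "openin X (\<Union>((\<lambda>S. {x \<in> topspace X. f x \<in> S}) ` K))"
      using K by (intro openin_Union) auto
    ultimately show "?L (\<Union>K)" using K by auto
  qed
  have "istopology ?L" unfolding istopology_def using i1 i2 by blast
  then show ?thesis unfolding quotient_topology_def by simp
qed

lemma quotient_topology_topspace:
  "topspace (quotient_topology X f) = f ` topspace X"
proof -
  have e: "{x \<in> topspace X. f x \<in> f ` topspace X} = topspace X" by auto
  have "openin (quotient_topology X f) (f ` topspace X)"
    unfolding quotient_topology_open e by auto
  then have "f ` topspace X \<subseteq> topspace (quotient_topology X f)" by (rule openin_subset)
  moreover have "topspace (quotient_topology X f) \<subseteq> f ` topspace X"
    using quotient_topology_open[of X f "topspace (quotient_topology X f)"] by simp
  ultimately show ?thesis by blast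
qed

lemma clopen_cover:
  assumes "X dim_le 0" "compactin X K" "\<forall>W\<in>\<W>. openin X W" "K \<subseteq> \<Union>\<W>"
  shows "\<exists>\<D>. finite \<D> \<and> (\<forall>D\<in>\<D>. closedin X D \<and> openin X D \<and> (\<exists>W\<in>\<W>. D \<subseteq> W)) \<and> K \<subseteq> \<Union>\<D>"
proof -
  let ?O = "{V. closedin X V \<and> openin X V \<and> (\<exists>W\<in>\<W>. V \<subseteq> W)}"
  have nb: "neighbourhood_base_of (\<lambda>U. closedin X U \<and> openin X U) X"
    using assms(1) dimension_le_0_neighbourhood_base_of_clopen by blast
  have "K \<subseteq> \<Union>?O"
  proof
    fix x assume "x \<in> K"
    then obtain W where W: "W \<in> \<W>" "x \<in> W" using assms(4) by blast
    then obtain U V where "openin X U" "closedin X V \<and> openin X V" "x \<in> U" "U \<subseteq> V" "V \<subseteq> W"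
    proof -
      have "openin X W" using assms(3) W(1) by blast
      then show ?thesis using nb W(2) that unfolding neighbourhood_base_of by meson
    qed
    then show "x \<in> \<Union>?O" using W by blast
  qed
  moreover have "\<forall>V\<in>?O. openin X V" by blast
  ultimately have "\<exists>F. finite F \<and> F \<subseteq> ?O \<and> K \<subseteq> \<Union>F"
    using assms(2)[unfolded compactin_def, THEN conjunct2, rule_format, of ?O] by blast
  then obtain F where "finite F" "F \<subseteq> ?O" "K \<subseteq> \<Union>F" by blast
  then show ?thesis by (intro exI[of _ F]) blast
qed

lemma clopen_between:
  assumes "X dim_le 0" "compact_space X" "closedin X A" "openin X Ov" "A \<subseteq> Ov"
  shows "\<exists>B. closedin X B \<and> openin X B \<and> A \<subseteq> B \<and> B \<subseteq> Ov"
proof -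
  have "compactin X A" using assms closedin_compact_space by blast
  then obtain \<D> where D: "finite \<D>" "\<forall>D\<in>\<D>. closedin X D \<and> openin X D \<and> (\<exists>W\<in>{Ov}. D \<subseteq> W)" "A \<subseteq> \<Union>\<D>"
    using clopen_cover[of X A "{Ov}"] assms by auto
  have "closedin X (\<Union>\<D>)" using D by (intro closedin_Union) auto
  moreover have "openin X (\<Union>\<D>)" using D by (intro openin_Union) auto
  moreover have "\<Union>\<D> \<subseteq> Ov" using D by blast
  ultimately show ?thesis using D(3) by blast
qed

definition disj :: "(nat \<Rightarrow> 'a set) \<Rightarrow> nat \<Rightarrow> 'a set" where
  "disj F j = F j - \<Union>(F ` {..<j})"

lemma disj_sub: "disj F j \<subseteq> F j" unfolding disj_def by auto

lemma disj_disjoint: "x \<in> disj F i \<Longrightarrow> x \<in> disj F j \<Longrightarrow> i = j"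
proof (rule ccontr)
  assume a: "x \<in> disj F i" "x \<in> disj F j" "i \<noteq> j"
  show False
  proof (cases "i < j")
    case True then show False using a unfolding disj_def by blast
  next
    case False then have "j < i" using a(3) by simp
    then show False using a unfolding disj_def by blast
  qed
qed

lemma disj_cover: "x \<in> F j \<Longrightarrow> \<exists>i\<le>j. x \<in> disj F i"
proof -
  assume "x \<in> F j"
  define i where "i = (LEAST i. x \<in> F i)"
  have "x \<in> F i" unfolding i_def by (rule LeastI) fact
  moreover have "i \<le> j" unfolding i_def by (rule Least_le) fact
  moreover have "\<And>l. l < i \<Longrightarrow> x \<notin> F l" unfolding i_def using not_less_Least by blast
  ultimately show ?thesis unfolding disj_def by auto
qed

lemma disj_clopen:
  assumes "\<And>j. closedin X (F j) \<and> openin X (F j)"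
  shows "closedin X (disj F j) \<and> openin X (disj F j)"
proof -
  have "closedin X (\<Union>(F ` {..<j}))" using assms by (intro closedin_Union) auto
  moreover have "openin X (\<Union>(F ` {..<j}))" using assms by (intro openin_Union) auto
  ultimately show ?thesis unfolding disj_def using assms[of j] by (simp add: closedin_diff openin_diff)
qed


lemma clopen_partition:
  assumes "X dim_le 0" "compact_space X" "\<forall>W\<in>\<W>. openin X W" "topspace X \<subseteq> \<Union>\<W>"
  shows "\<exists>(m::nat) C. (\<forall>j<m. closedin X (C j) \<and> openin X (C j) \<and> (\<exists>W\<in>\<W>. C j \<subseteq> W))
          \<and> (\<forall>x\<in>topspace X. \<exists>j<m. x \<in> C j) \<and> (\<forall>i j x. x \<in> C i \<longrightarrow> x \<in> C j \<longrightarrow> i = j)"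
proof -
  have "compactin X (topspace X)" using assms(2) compact_space_def by blast
  then obtain \<D> where D: "finite \<D>" "\<forall>D\<in>\<D>. closedin X D \<and> openin X D \<and> (\<exists>W\<in>\<W>. D \<subseteq> W)"
    "topspace X \<subseteq> \<Union>\<D>"
    using clopen_cover[of X "topspace X" \<W>] assms by blast
  obtain ds where ds: "set ds = \<D>" using finite_list[OF D(1)] by blast
  define m where "m = length ds"
  define Df where "Df j = (if j < m then ds ! j else {})" for j
  have dsm: "j < m \<Longrightarrow> Df j \<in> \<D>" for j
    unfolding Df_def m_def using ds nth_mem by force
  have Dcl: "closedin X (Df j) \<and> openin X (Df j)" for j
  proof (cases "j < m")
    case True then show ?thesis using dsm D(2) by blast
  next
    case False then show ?thesis unfolding Df_def by simp
  qed
  have DW: "j < m \<Longrightarrow> \<exists>W\<in>\<W>. Df j \<subseteq> W" for j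
    using dsm D(2) by blast
  have C1: "\<forall>j<m. closedin X (disj Df j) \<and> openin X (disj Df j) \<and> (\<exists>W\<in>\<W>. disj Df j \<subseteq> W)"
  proof (intro allI impI conjI)
    fix j assume "j < m"
    show "closedin X (disj Df j)" "openin X (disj Df j)" using disj_clopen[of X Df, OF Dcl] by auto
    obtain W where "W \<in> \<W>" "Df j \<subseteq> W" using DW \<open>j < m\<close> by blast
    then show "\<exists>W\<in>\<W>. disj Df j \<subseteq> W" using disj_sub[of Df j] by blast
  qed
  have C2: "\<forall>x\<in>topspace X. \<exists>j<m. x \<in> disj Df j"
  proof
    fix x assume "x \<in> topspace X"
    then obtain D0 where "D0 \<in> \<D>" "x \<in> D0" using D(3) by blast
    then obtain j where "j < m" "ds ! j = D0" using ds unfolding m_def by (auto simp: in_set_conv_nth)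
    then have "x \<in> Df j" using \<open>x \<in> D0\<close> unfolding Df_def by simp
    then obtain i where "i \<le> j" "x \<in> disj Df i" using disj_cover[of x Df j] by blast
    then show "\<exists>j<m. x \<in> disj Df j" using \<open>j < m\<close> by (intro exI[of _ i]) simp
  qed
  have C3: "\<forall>i j x. x \<in> disj Df i \<longrightarrow> x \<in> disj Df j \<longrightarrow> i = j"
    using disj_disjoint[of _ Df] by blast
  show ?thesis using C1 C2 C3 by blast
qed

theorem mainTheorem4:
  fixes X :: "'a topology" and E :: "('a \<times> 'a) set"
  assumes "topological_graph X E"
    and "trans E"
    and "\<forall>y \<in> topspace (realization X E).
           finite {v \<in> topspace X. rel_class E v = y} \<and>
           card {v \<in> topspace X. rel_class E v = y} \<le> 2"
  shows "covering_dim_le (realization X E) 1"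
proof -
  define TX where "TX = topspace X"
  define \<pi> where "\<pi> = rel_class E"
  define Y where "Y = realization X E"
  have cs: "compact_space X" and d0: "X dim_le 0" and ES: "E \<subseteq> TX \<times> TX"
    and Ecl: "closedin (prod_topology X X) E" and refl: "\<forall>x\<in>TX. (x,x) \<in> E" and sy: "sym E"
    using assms(1) unfolding topological_graph_def TX_def by auto
  have eqv: "equiv TX E" unfolding equiv_def refl_on_def using ES refl sy assms(2) by blast
  have Eiff: "(x, y) \<in> E \<longleftrightarrow> \<pi> x = \<pi> y \<and> x \<in> TX \<and> y \<in> TX" for x y
    unfolding \<pi>_def rel_class_def using equiv_class_eq_iff[OF eqv] by blast
  have memiff: "y \<in> \<pi> x \<longleftrightarrow> (x, y) \<in> E" for x y unfolding \<pi>_def rel_class_def by blast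
  have openY: "openin Y U \<longleftrightarrow> U \<subseteq> \<pi> ` TX \<and> openin X {x \<in> TX. \<pi> x \<in> U}" for U
    unfolding Y_def realization_def quotient_topology_open \<pi>_def TX_def by simp
  have topY: "topspace Y = \<pi> ` TX"
    unfolding Y_def realization_def quotient_topology_topspace \<pi>_def TX_def by simp
  have fib: "\<forall>x\<in>TX. finite {v \<in> TX. \<pi> v = \<pi> x} \<and> card {v \<in> TX. \<pi> v = \<pi> x} \<le> 2"
    using assms(3) topY unfolding Y_def \<pi>_def TX_def by auto
  have fstc: "closed_map (prod_topology X X) X fst" using closed_map_fst[OF cs] .
  have sat_closed: "closedin X (fst ` (E \<inter> (TX \<times> K)))" if "closedin X K" for K
  proof -
    have "closedin (prod_topology X X) (TX \<times> K)"
      using that by (simp add: closedin_prod_Times_iff TX_def)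
    then have "closedin (prod_topology X X) (E \<inter> (TX \<times> K))" using Ecl by (rule closedin_Int[rotated])
    then show ?thesis using fstc unfolding closed_map_def by blast
  qed
  show ?thesis unfolding covering_dim_le_def Y_def[symmetric]
  proof (intro allI impI)
    fix \<U> assume U: "finite \<U> \<and> (\<forall>U\<in>\<U>. openin Y U) \<and> \<Union>\<U> = topspace Y"
    define Wf where "Wf U = {x \<in> TX. \<pi> x \<in> U}" for U
    have Wopen: "\<forall>W\<in>Wf ` \<U>. openin X W" using U openY unfolding Wf_def by auto
    have Wcov: "topspace X \<subseteq> \<Union>(Wf ` \<U>)"
    proof
      fix x assume "x \<in> topspace X"
      then have "\<pi> x \<in> \<Union>\<U>" using U topY TX_def by auto
      then show "x \<in> \<Union>(Wf ` \<U>)" using \<open>x \<in> topspace X\<close> unfolding Wf_def TX_def by auto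
    qed
    obtain m :: nat and C :: "nat \<Rightarrow> 'a set" where Ccl: "\<forall>j<m. closedin X (C j) \<and> openin X (C j) \<and> (\<exists>W\<in>Wf ` \<U>. C j \<subseteq> W)"
      and Ccov0: "\<forall>x\<in>topspace X. \<exists>j<m. x \<in> C j" and Cdis: "\<forall>i j x. x \<in> C i \<longrightarrow> x \<in> C j \<longrightarrow> i = j"
      using clopen_partition[OF d0 cs Wopen Wcov] by (elim exE conjE)
    have Ccov: "\<forall>x\<in>TX. \<exists>j<m. x \<in> C j" using Ccov0 unfolding TX_def .
    have "\<forall>j. \<exists>U. j < m \<longrightarrow> U \<in> \<U> \<and> C j \<subseteq> Wf U" using Ccl by blast
    then obtain u where u: "\<And>j. j < m \<Longrightarrow> u j \<in> \<U> \<and> C j \<subseteq> Wf (u j)" by metis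
    have CTX: "j < m \<Longrightarrow> C j \<subseteq> TX" for j using Ccl closedin_subset TX_def by blast
    define A where "A j = fst ` (E \<inter> (TX \<times> C j)) - C j" for j
    have Aclosed: "j < m \<Longrightarrow> closedin X (A j)" for j
    proof -
      assume "j < m"
      then have "closedin X (C j)" "openin X (C j)" using Ccl by auto
      then show ?thesis unfolding A_def by (intro closedin_diff sat_closed)
    qed
    have Amem: "x \<in> A j \<longleftrightarrow> x \<in> TX \<and> x \<notin> C j \<and> (\<exists>a\<in>C j. (x, a) \<in> E)" for x j
    proof
      assume "x \<in> A j"
      then obtain p where "p \<in> E" "p \<in> TX \<times> C j" "x = fst p" "x \<notin> C j" unfolding A_def by blast
      then show "x \<in> TX \<and> x \<notin> C j \<and> (\<exists>a\<in>C j. (x, a) \<in> E)" by (cases p) auto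
    next
      assume "x \<in> TX \<and> x \<notin> C j \<and> (\<exists>a\<in>C j. (x, a) \<in> E)"
      then obtain a where "a \<in> C j" "(x, a) \<in> E" "x \<in> TX" "x \<notin> C j" by blast
      then have "(x, a) \<in> E \<inter> (TX \<times> C j)" by blast
      then have "x \<in> fst ` (E \<inter> (TX \<times> C j))" by (rule rev_image_eqI) simp
      then show "x \<in> A j" unfolding A_def using \<open>x \<notin> C j\<close> by blast
    qed
    have Adis: False if H: "i < m" "j < m" "i \<noteq> j" "x \<in> A i" "x \<in> A j" for i j x
    proof -
      obtain a where a: "a \<in> C i" "(x, a) \<in> E" "x \<notin> C i" using H(4) Amem[of x i] by blast
      obtain b where b: "b \<in> C j" "(x, b) \<in> E" "x \<notin> C j" using H(5) Amem[of x j] by blast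
      have "a \<noteq> b" using a(1) b(1) Cdis H(3) by metis
      have "x \<noteq> a" "x \<noteq> b" using a b by auto
      have xT: "x \<in> TX" and "\<pi> a = \<pi> x" "\<pi> b = \<pi> x" "a \<in> TX" "b \<in> TX"
        using a(2) b(2) Eiff[of x a] Eiff[of x b] by auto
      then have sub: "{x, a, b} \<subseteq> {v \<in> TX. \<pi> v = \<pi> x}" by auto
      have "card {x, a, b} = 3" using \<open>a \<noteq> b\<close> \<open>x \<noteq> a\<close> \<open>x \<noteq> b\<close> by simp
      moreover have "card {x, a, b} \<le> card {v \<in> TX. \<pi> v = \<pi> x}"
        using card_mono[OF _ sub] fib xT by blast
      ultimately show False using fib xT by fastforce
    qed
    have AW: "j < m \<Longrightarrow> A j \<subseteq> Wf (u j)" for j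
    proof
      fix x assume "j < m" "x \<in> A j"
      then obtain a where "a \<in> C j" "(x, a) \<in> E" using Amem by blast
      then have "\<pi> a \<in> u j" "\<pi> x = \<pi> a" "x \<in> TX" using u[OF \<open>j < m\<close>] Eiff unfolding Wf_def by auto
      then show "x \<in> Wf (u j)" unfolding Wf_def by simp
    qed
    define Ov where "Ov j = Wf (u j) - \<Union>(A ` ({..<m} - {j}))" for j
    have Ovopen: "j < m \<Longrightarrow> openin X (Ov j)" for j
    proof -
      assume "j < m"
      have "closedin X (\<Union>(A ` ({..<m} - {j})))" using Aclosed by (intro closedin_Union) auto
      moreover have "openin X (Wf (u j))" using Wopen u[OF \<open>j < m\<close>] by blast
      ultimately show ?thesis unfolding Ov_def by (simp add: openin_diff)
    qed
    have AOv: "j < m \<Longrightarrow> A j \<subseteq> Ov j" for j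
      unfolding Ov_def using AW Adis by blast
    have "\<forall>j. \<exists>B. j < m \<longrightarrow> closedin X B \<and> openin X B \<and> A j \<subseteq> B \<and> B \<subseteq> Ov j"
    proof
      fix j show "\<exists>B. j < m \<longrightarrow> closedin X B \<and> openin X B \<and> A j \<subseteq> B \<and> B \<subseteq> Ov j"
      proof (cases "j < m")
        case True
        then show ?thesis using clopen_between[OF d0 cs Aclosed[OF True] Ovopen[OF True] AOv[OF True]] by blast
      qed simp
    qed
    then obtain B' where B': "\<And>j. j < m \<Longrightarrow> closedin X (B' j) \<and> openin X (B' j) \<and> A j \<subseteq> B' j \<and> B' j \<subseteq> Ov j"
      by metis
    define B'' where "B'' j = (if j < m then B' j else {})" for j
    define B where "B = disj B''"
    have B''cl: "closedin X (B'' j) \<and> openin X (B'' j)" for j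
      unfolding B''_def using B' by auto
    have Bcl: "closedin X (B j) \<and> openin X (B j)" for j
      unfolding B_def using disj_clopen[of X B'', OF B''cl] .
    have BOv: "j < m \<Longrightarrow> B j \<subseteq> Ov j" for j
      using disj_sub[of B'' j] B' unfolding B_def B''_def by auto
    have Bm: "j \<ge> m \<Longrightarrow> B j = {}" for j
      using disj_sub[of B'' j] unfolding B_def B''_def by auto
    have AB: "j < m \<Longrightarrow> A j \<subseteq> B j" for j
    proof
      fix x assume j: "j < m" and x: "x \<in> A j"
      have "x \<in> B'' j" using B' j x unfolding B''_def by auto
      moreover have "x \<notin> B'' l" if "l < j" for l
      proof
        assume "x \<in> B'' l"
        moreover have lm: "l < m" using that j by simp
        ultimately have "x \<in> Ov l" using B'[OF lm] unfolding B''_def by auto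
        then show False using x j that unfolding Ov_def by auto
      qed
      ultimately show "x \<in> B j" unfolding B_def disj_def by auto
    qed
    define S where "S j = C j \<union> B j" for j
    have SW: "j < m \<Longrightarrow> S j \<subseteq> Wf (u j)" for j
      unfolding S_def using u BOv unfolding Ov_def by blast
    have Sopen: "j < m \<Longrightarrow> openin X (S j)" for j
      unfolding S_def using Ccl Bcl by (simp add: openin_Un)
    define V where "V j = {x \<in> TX. \<pi> x \<subseteq> S j}" for j
    have Veq: "V j = TX - fst ` (E \<inter> (TX \<times> (TX - S j)))" for j
    proof (intro set_eqI iffI)
      fix x assume "x \<in> V j"
      then have x: "x \<in> TX" "\<pi> x \<subseteq> S j" unfolding V_def by auto
      have "x \<notin> fst ` (E \<inter> (TX \<times> (TX - S j)))"
      proof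
        assume "x \<in> fst ` (E \<inter> (TX \<times> (TX - S j)))"
        then obtain a b where ab: "(a, b) \<in> E" "b \<notin> S j" "x = a" by force
        then have "b \<in> \<pi> x" using memiff by simp
        then show False using x ab by blast
      qed
      then show "x \<in> TX - fst ` (E \<inter> (TX \<times> (TX - S j)))" using x by blast
    next
      fix x assume "x \<in> TX - fst ` (E \<inter> (TX \<times> (TX - S j)))"
      then have x: "x \<in> TX" "x \<notin> fst ` (E \<inter> (TX \<times> (TX - S j)))" by auto
      have "y \<in> S j" if "y \<in> \<pi> x" for y
      proof (rule ccontr)
        assume "y \<notin> S j"
        have "(x, y) \<in> E" using that memiff by simp
        then have "(x, y) \<in> E \<inter> (TX \<times> (TX - S j))" using ES \<open>y \<notin> S j\<close> by blast
        then have "x \<in> fst ` (E \<inter> (TX \<times> (TX - S j)))" by (rule rev_image_eqI) simp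
        then show False using x by blast
      qed
      then show "x \<in> V j" unfolding V_def using x by blast
    qed
    have Vopen: "j < m \<Longrightarrow> openin X (V j)" for j
    proof -
      assume "j < m"
      have "closedin X (TX - S j)" using Sopen[OF \<open>j < m\<close>] TX_def by (simp add: closedin_diff)
      then have "closedin X (fst ` (E \<inter> (TX \<times> (TX - S j))))" by (rule sat_closed)
      then show ?thesis unfolding Veq TX_def by (simp add: openin_diff)
    qed
    have Vsat: "{x \<in> TX. \<pi> x \<in> \<pi> ` V j} = V j" for j
      unfolding V_def by auto
    define \<V> where "\<V> = (\<lambda>j. \<pi> ` V j) ` {..<m}"
    have selfmem: "x \<in> TX \<Longrightarrow> x \<in> \<pi> x" for x using memiff refl by blast
    have VS: "V j \<subseteq> S j" for j unfolding V_def using selfmem by blast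
    have xV: "x \<in> V k" if "x \<in> TX" "k < m" "x \<in> C k" for x k
    proof -
      have "y \<in> S k" if "y \<in> \<pi> x" for y
      proof -
        have "(x, y) \<in> E" using that memiff by blast
        then have "(y, x) \<in> E" "y \<in> TX" using sy ES unfolding sym_def by auto
        show ?thesis
        proof (cases "y \<in> C k")
          case True then show ?thesis unfolding S_def by blast
        next
          case False
          then have "y \<in> A k" using Amem \<open>(y, x) \<in> E\<close> \<open>y \<in> TX\<close> \<open>x \<in> C k\<close> by blast
          then show ?thesis using AB \<open>k < m\<close> unfolding S_def by blast
        qed
      qed
      then show ?thesis unfolding V_def using \<open>x \<in> TX\<close> by blast
    qed
    show "\<exists>\<V>. finite \<V> \<and> (\<forall>V\<in>\<V>. openin Y V) \<and> \<Union>\<V> = topspace Y \<and>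
              (\<forall>V\<in>\<V>. \<exists>U\<in>\<U>. V \<subseteq> U) \<and>
              (\<forall>x\<in>topspace Y. int (card {V \<in> \<V>. x \<in> V}) \<le> 1 + 1)"
    proof (intro exI[of _ \<V>] conjI ballI)
      show "finite \<V>" unfolding \<V>_def by simp
    next
      fix W assume "W \<in> \<V>"
      then obtain j where j: "j < m" "W = \<pi> ` V j" unfolding \<V>_def by blast
      have "\<pi> ` V j \<subseteq> \<pi> ` TX" unfolding V_def by blast
      then show "openin Y W" using j openY Vsat Vopen by simp
    next
      show "\<Union>\<V> = topspace Y"
      proof
        show "\<Union>\<V> \<subseteq> topspace Y" unfolding \<V>_def topY V_def by blast
        show "topspace Y \<subseteq> \<Union>\<V>"
        proof
          fix y assume "y \<in> topspace Y"
          then obtain x where x: "x \<in> TX" "y = \<pi> x" using topY by blast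
          then obtain k where "k < m" "x \<in> C k" using Ccov by blast
          then have "x \<in> V k" using xV x by blast
          then show "y \<in> \<Union>\<V>" unfolding \<V>_def using x \<open>k < m\<close> by blast
        qed
      qed
    next
      fix W assume "W \<in> \<V>"
      then obtain j where j: "j < m" "W = \<pi> ` V j" unfolding \<V>_def by blast
      have "W \<subseteq> u j"
      proof
        fix y assume "y \<in> W"
        then obtain v where "v \<in> V j" "y = \<pi> v" using j by blast
        then have "v \<in> Wf (u j)" using VS SW j by blast
        then show "y \<in> u j" using \<open>y = \<pi> v\<close> unfolding Wf_def by blast
      qed
      then show "\<exists>U\<in>\<U>. W \<subseteq> U" using u j by blast
    next
      fix y assume "y \<in> topspace Y"
      then obtain x where x: "x \<in> TX" "y = \<pi> x" using topY by blast
      then obtain k where k: "k < m" "x \<in> C k" using Ccov by blast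
      have sub1: "{W \<in> \<V>. y \<in> W} \<subseteq> (\<lambda>j. \<pi> ` V j) ` {j. j < m \<and> x \<in> S j}"
      proof
        fix W assume "W \<in> {W \<in> \<V>. y \<in> W}"
        then obtain j where j: "j < m" "W = \<pi> ` V j" "y \<in> W" unfolding \<V>_def by blast
        then obtain v where v: "v \<in> V j" "\<pi> v = \<pi> x" using x by blast
        then have "x \<in> \<pi> v" using selfmem x by simp
        then have "x \<in> S j" using v unfolding V_def by blast
        then show "W \<in> (\<lambda>j. \<pi> ` V j) ` {j. j < m \<and> x \<in> S j}" using j by blast
      qed
      obtain j0 where sub2: "{j. j < m \<and> x \<in> S j} \<subseteq> {k, j0}"
      proof (cases "\<exists>j0. x \<in> B j0")
        case True
        then obtain j0 where "x \<in> B j0" by blast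
        then have "{j. j < m \<and> x \<in> S j} \<subseteq> {k, j0}"
          using k Cdis disj_disjoint[of x B'' j0] unfolding S_def B_def by blast
        then show ?thesis using that by blast
      next
        case False
        then have "{j. j < m \<and> x \<in> S j} \<subseteq> {k, k}" using k Cdis unfolding S_def by blast
        then show ?thesis using that by blast
      qed
      have "card {W \<in> \<V>. y \<in> W} \<le> card ((\<lambda>j. \<pi> ` V j) ` {j. j < m \<and> x \<in> S j})"
        by (rule card_mono[OF _ sub1]) simp
      also have "\<dots> \<le> card {j. j < m \<and> x \<in> S j}" by (rule card_image_le) simp
      also have "\<dots> \<le> card {k, j0}" by (rule card_mono[OF _ sub2]) simp
      also have "\<dots> \<le> 2" by (simp add: card_insert_if)
      finally show "int (card {W \<in> \<V>. y \<in> W}) \<le> 1 + 1" by simp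
    qed
  qed
qed

end
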